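(* Let $(M,g)$ be a complete oriented four-dimensional Einstein manifold with $\mathrm{Ric}=g$ whose sectional curvature satisfies $K\le \frac{\sqrt3}{2}$. Fix $o\in M$ and a Berger basis $\{e_1,\dots,e_4\}$ at $o$ (see context), and let $a_1,a_2,a_3,c_1,c_2,c_3$ and $I$ be defined from it as in the context. Suppose that at $o$ the minimal sectional curvature satisfies $K_{12}\le-\epsilon<0$ for some constant $\epsilon>0$. Then: (1) if $a_2\ge 0$ and $c_2\ge 0$, then $I\ge \frac{16}{3}\epsilon$; (2) if $a_2<0$ or $c_2<0$, then $I>\frac14\epsilon$.
   Context: Curvature conventions: $R_{ijkl}=R(e_i,e_j,e_k,e_l)$ with $K_{ij}=R_{ijij}$ the sectional curvature of the plane spanned by $e_i,e_j$. A Berger basis at $o$ is a positively oriented orthonormal basis $\{e_i\}$ of $T_oM$ such that: (1) $K_{12}=\min\{K(\pi):\pi\subset T_oM\}$; (2) $K_{14}=\max\{K(\pi):\pi\subset T_oM\}$; (3) $R_{ikjk}=0$ for all $i\ne j$; (4) $|R_{1342}-R_{1234}|\le K_{13}-K_{12}$, $|R_{1423}-R_{1342}|\le K_{14}-K_{13}$, $|R_{1423}-R_{1234}|\le K_{14}-K_{12}$ (such a basis exists at every point of an oriented Einstein four-manifold, by Berger). Define $a_1=2(K_{12}+R_{1234})$, $a_2=2(K_{13}+R_{1342})$, $a_3=2(K_{14}+R_{1423})$, $c_1=2(K_{12}-R_{1234})$, $c_2=2(K_{13}-R_{1342})$, $c_3=2(K_{14}-R_{1423})$; these are the eigenvalues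 of the curvature operator restricted to self-dual and anti-self-dual 2-forms respectively, with $a_1\le a_2\le a_3$ and $c_1\le c_2\le c_3$. Define $$I=(c_2-c_1)c_3+(c_3-c_1)c_2+(a_2-a_1)a_3+(a_3-a_1)a_2 .$$ *)

theory Defs
  imports Complex_Main
begin

text \<open>Pointwise (algebraic) model: the curvature tensor of (M,g) at the point o is
  given by its components R i j k l = R(e_i,e_j,e_k,e_l) with respect to a positively
  oriented orthonormal basis e_1,...,e_4 of T_oM, indices ranging over {1..4}.
  Tangent vectors at o are represented by their coordinate functions nat => real
  (only the values at 1..4 matter).\<close>

type_synonym curv = "nat \<Rightarrow> nat \<Rightarrow> nat \<Rightarrow> nat \<Rightarrow> real"

definition idx :: "nat set" where "idx = {1..4}"

definition curvature_tensor :: "curv \<Rightarrow> bool" where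
  "curvature_tensor R \<longleftrightarrow>
     (\<forall>i\<in>idx. \<forall>j\<in>idx. \<forall>k\<in>idx. \<forall>l\<in>idx.
        R i j k l = - R j i k l \<and> R i j k l = - R i j l k \<and> R i j k l = R k l i j \<and>
        R i j k l + R j k i l + R k i j l = 0)"

definition Rform :: "curv \<Rightarrow> (nat \<Rightarrow> real) \<Rightarrow> (nat \<Rightarrow> real) \<Rightarrow> (nat \<Rightarrow> real) \<Rightarrow> (nat \<Rightarrow> real) \<Rightarrow> real" where
  "Rform R u v w z = (\<Sum>i\<in>idx. \<Sum>j\<in>idx. \<Sum>k\<in>idx. \<Sum>l\<in>idx. R i j k l * u i * v j * w k * z l)"

definition inner4 :: "(nat \<Rightarrow> real) \<Rightarrow> (nat \<Rightarrow> real) \<Rightarrow> real" where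
  "inner4 u v = (\<Sum>i\<in>idx. u i * v i)"

definition orthonormal_pair :: "(nat \<Rightarrow> real) \<Rightarrow> (nat \<Rightarrow> real) \<Rightarrow> bool" where
  "orthonormal_pair u v \<longleftrightarrow> inner4 u u = 1 \<and> inner4 v v = 1 \<and> inner4 u v = 0"

definition sec :: "curv \<Rightarrow> (nat \<Rightarrow> real) \<Rightarrow> (nat \<Rightarrow> real) \<Rightarrow> real" where
  "sec R u v = Rform R u v u v"

definition Kc :: "curv \<Rightarrow> nat \<Rightarrow> nat \<Rightarrow> real" where
  "Kc R i j = R i j i j"

definition einstein_one :: "curv \<Rightarrow> bool" where
  "einstein_one R \<longleftrightarrow> (\<forall>i\<in>idx. \<forall>j\<in>idx. (\<Sum>k\<in>idx. R i k j k) = (if i = j then 1 else 0))"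

definition berger_basis :: "curv \<Rightarrow> bool" where
  "berger_basis R \<longleftrightarrow>
     (\<forall>u v. orthonormal_pair u v \<longrightarrow> Kc R 1 2 \<le> sec R u v) \<and>
     (\<forall>u v. orthonormal_pair u v \<longrightarrow> sec R u v \<le> Kc R 1 4) \<and>
     (\<forall>i\<in>idx. \<forall>j\<in>idx. \<forall>k\<in>idx. i \<noteq> j \<longrightarrow> R i k j k = 0) \<and>
     \<bar>R 1 3 4 2 - R 1 2 3 4\<bar> \<le> Kc R 1 3 - Kc R 1 2 \<and>
     \<bar>R 1 4 2 3 - R 1 3 4 2\<bar> \<le> Kc R 1 4 - Kc R 1 3 \<and>
     \<bar>R 1 4 2 3 - R 1 2 3 4\<bar> \<le> Kc R 1 4 - Kc R 1 2"

definition a1 :: "curv \<Rightarrow> real" where "a1 R = 2 * (Kc R 1 2 + R 1 2 3 4)"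
definition a2 :: "curv \<Rightarrow> real" where "a2 R = 2 * (Kc R 1 3 + R 1 3 4 2)"
definition a3 :: "curv \<Rightarrow> real" where "a3 R = 2 * (Kc R 1 4 + R 1 4 2 3)"
definition c1 :: "curv \<Rightarrow> real" where "c1 R = 2 * (Kc R 1 2 - R 1 2 3 4)"
definition c2 :: "curv \<Rightarrow> real" where "c2 R = 2 * (Kc R 1 3 - R 1 3 4 2)"
definition c3 :: "curv \<Rightarrow> real" where "c3 R = 2 * (Kc R 1 4 - R 1 4 2 3)"

definition Iq :: "curv \<Rightarrow> real" where
  "Iq R = (c2 R - c1 R) * c3 R + (c3 R - c1 R) * c2 R + (a2 R - a1 R) * a3 R + (a3 R - a1 R) * a2 R"

end

theory Submission
  imports Defs
begin


lemma g_nonneg: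
  fixes p q s :: real
  assumes s2: "s*s = 12" and s1: "s > 3.4" and s3: "s < 3.5"
    and q0: "0 < q" and qp: "q \<le> p" and dom: "p/2 + q \<le> s - 3"
  shows "2*p*p - 4*p*q - 4*q*q + (2*s-8)*p + (4*s-16)*q + 12*s - 40 \<ge> 0"
proof -
  define g0 where "g0 = 2*p*p + (2*s-8)*p + 12*s - 40"
  have g0: "g0 \<ge> 0"
  proof -
    have "g0 = 2*(p + (s-4)/2)^2 + (16*s - 54)" unfolding g0_def using s2
      by (simp add: power2_eq_square field_simps)
    moreover have "16*s - 54 > 0" using s1 by linarith
    ultimately show ?thesis by (metis add_nonneg_nonneg less_imp_le mult_nonneg_nonneg zero_le_numeral zero_le_power2)
  qed
  have p0: "p > 0" using q0 qp by linarith
  show ?thesis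
  proof (cases "p \<le> (2*s-6)/3")
    case True
    define gp where "gp = -6*p*p + (6*s-24)*p + 12*s - 40"
    have e: "3*gp = -2*((3*p - (2*s-6))*(3*p - (s-6)))" unfolding gp_def using s2 by (simp add: algebra_simps)
    have "(3*p - (2*s-6)) \<le> 0" using True by (simp add: field_simps)
    moreover have "3*p - (s-6) \<ge> 0" using p0 s3 by linarith
    ultimately have "(3*p - (2*s-6))*(3*p - (s-6)) \<le> 0" by (simp add: mult_nonpos_nonneg)
    hence gp: "gp \<ge> 0" using e by linarith
    have id: "p*(2*p*p - 4*p*q - 4*q*q + (2*s-8)*p + (4*s-16)*q + 12*s - 40)
       = (p-q)*g0 + q*gp + 4*p*q*(p-q)" unfolding g0_def gp_def by algebra
    have "(p-q)*g0 \<ge> 0" using qp g0 by simp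
    moreover have "q*gp \<ge> 0" using q0 gp by simp
    moreover have "4*p*q*(p-q) \<ge> 0" using p0 q0 qp by simp
    ultimately have "p*(2*p*p - 4*p*q - 4*q*q + (2*s-8)*p + (4*s-16)*q + 12*s - 40) \<ge> 0"
      using id by linarith
    thus ?thesis using p0 by (simp add: zero_le_mult_iff)
  next
    case False
    define qm where "qm = s - 3 - p/2"
    have qmq: "q \<le> qm" using dom qm_def by linarith
    have qm0: "qm > 0" using q0 qmq by linarith
    define h where "h = 3*p*p + 8*s - 28"
    have e: "3*h = (3*p - (2*s-6))*(3*p + (2*s-6))" unfolding h_def using s2 by (simp add: algebra_simps)
    have "3*p - (2*s-6) \<ge> 0" using False by (simp add: field_simps)
    moreover have "3*p + (2*s-6) \<ge> 0" using p0 s1 by linarith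
    ultimately have "(3*p - (2*s-6))*(3*p + (2*s-6)) \<ge> 0" by simp
    hence h: "h \<ge> 0" using e by linarith
    have id: "qm*(2*p*p - 4*p*q - 4*q*q + (2*s-8)*p + (4*s-16)*q + 12*s - 40)
       = (qm-q)*g0 + q*h + 4*q*qm*(qm-q)" unfolding g0_def h_def qm_def using s2 by (simp add: algebra_simps)
    have "(qm-q)*g0 \<ge> 0" using qmq g0 by simp
    moreover have "q*h \<ge> 0" using q0 h by simp
    moreover have "4*q*qm*(qm-q) \<ge> 0" using qm0 q0 qmq by simp
    ultimately have "qm*(2*p*p - 4*p*q - 4*q*q + (2*s-8)*p + (4*s-16)*q + 12*s - 40) \<ge> 0"
      using id by linarith
    thus ?thesis using qm0 by (simp add: zero_le_mult_iff)
  qed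
qed

lemma case2:
  fixes a1 a2 a3 c1 c2 c3 s :: real
  assumes s2: "s*s = 12" and s1: "s > 3.4" and s3: "s < 3.5"
    and h1: "a1 \<le> a2" and h2: "a2 \<le> a3" and h3: "c1 \<le> c2" and h4: "c2 \<le> c3"
    and sa: "a1 + a2 + a3 = 2" and sc: "c1 + c2 + c3 = 2"
    and top: "a3 + c3 \<le> s" and neg: "a1 + c1 < 0" and a2n: "a2 < 0"
  shows "(c2-c1)*c3 + (c3-c1)*c2 + (a2-a1)*a3 + (a3-a1)*a2 + (a1+c1)/16 > 0"
proof -
  define p where "p = -a1"
  define q where "q = -a2"
  define M where "M = s - 2 - p - q"
  have a1e: "a1 = -p" and a2e: "a2 = -q" using p_def q_def by auto
  have a3e: "a3 = 2 + p + q" using sa p_def q_def by linarith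
  have c3e: "c3 = 2 - c1 - c2" using sc by linarith
  have Mc3: "M \<ge> c3" using top a3e M_def by linarith
  have F1: "(M-c3)*(M-c2) \<ge> 0" using Mc3 h4 by simp
  have pc: "p - c1 > 0" using neg p_def by linarith
  have q0: "q > 0" using a2n q_def by linarith
  have c3b: "c3 \<ge> 2/3" using h3 h4 sc by linarith
  have "2+2*M-1/16-c1-p > 0" using pc q0 c3b Mc3 M_def s3 by linarith
  hence F2: "(p-c1)*(2+2*M-1/16-c1-p) > 0" using pc by simp
  have G: "2*p*p - 4*p*q - 4*q*q + (2*s-8)*p + (4*s-16)*q + 12*s - 40 \<ge> 0"
    by (rule g_nonneg[OF s2 s1 s3 q0]) (use h1 p_def q_def Mc3 h4 sc pc M_def in linarith)+
  have E: "(c2-c1)*c3 + (c3-c1)*c2 + (a2-a1)*a3 + (a3-a1)*a2 + (a1+c1)/16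
     = (2*p*p - 4*p*q - 4*q*q + (2*s-8)*p + (4*s-16)*q + 12*s - 40)
       + 2*((M-c3)*(M-c2)) + (p-c1)*(2+2*M-1/16-c1-p)"
    unfolding a1e a2e a3e c3e M_def using s2 by (simp add: field_simps)
  show ?thesis using E F1 F2 G by linarith
qed


lemma final_generic:
  fixes a1 a2 a3 c1 c2 c3 s k e :: real
  assumes s2: "s*s = 12" and s1: "s > 3.4" and s3: "s < 3.5"
    and h1: "a1 \<le> a2" and h2: "a2 \<le> a3" and h3: "c1 \<le> c2" and h4: "c2 \<le> c3"
    and sa: "a1 + a2 + a3 = 2" and sc: "c1 + c2 + c3 = 2"
    and top: "a3 + c3 \<le> s" and x4: "a1 + c1 = 4 * k" and ke: "k \<le> - e" and e0: "e > 0"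
  shows "(a2 \<ge> 0 \<and> c2 \<ge> 0 \<longrightarrow> (c2 - c1) * c3 + (c3 - c1) * c2 + (a2 - a1) * a3 + (a3 - a1) * a2 \<ge> 16 / 3 * e) \<and>
         (a2 < 0 \<or> c2 < 0 \<longrightarrow> (c2 - c1) * c3 + (c3 - c1) * c2 + (a2 - a1) * a3 + (a3 - a1) * a2 > e / 4)"
proof
  have neg: "a1 + c1 < 0" using x4 ke e0 by linarith
  show "a2 \<ge> 0 \<and> c2 \<ge> 0 \<longrightarrow> (c2 - c1) * c3 + (c3 - c1) * c2 + (a2 - a1) * a3 + (a3 - a1) * a2 \<ge> 16 / 3 * e"
  proof
    assume h: "a2 \<ge> 0 \<and> c2 \<ge> 0"
    have A: "(a2 - a1) * a3 + (a3 - a1) * a2 = 2*(a2 * a3) + a1 * a1 - 2 * a1"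
    proof -
      have "a2 + a3 = 2 - a1" using sa by linarith
      hence "a1 * (a2 + a3) = a1 * (2 - a1)" by simp
      thus ?thesis by (simp add: algebra_simps)
    qed
    have C: "(c2 - c1) * c3 + (c3 - c1) * c2 = 2*(c2 * c3) + c1 * c1 - 2 * c1"
    proof -
      have "c2 + c3 = 2 - c1" using sc by linarith
      hence "c1 * (c2 + c3) = c1 * (2 - c1)" by simp
      thus ?thesis by (simp add: algebra_simps)
    qed
    have "a2 * a3 \<ge> 0" using h h2 by simp
    moreover have "c2 * c3 \<ge> 0" using h h4 by simp
    moreover have "a1 * a1 \<ge> 0" "c1 * c1 \<ge> 0" by simp_all
    ultimately show "(c2 - c1) * c3 + (c3 - c1) * c2 + (a2 - a1) * a3 + (a3 - a1) * a2 \<ge> 16 / 3 * e"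
      using A C x4 ke e0 by linarith
  qed
  show "a2 < 0 \<or> c2 < 0 \<longrightarrow> (c2 - c1) * c3 + (c3 - c1) * c2 + (a2 - a1) * a3 + (a3 - a1) * a2 > e / 4"
  proof
    assume h: "a2 < 0 \<or> c2 < 0"
    have "(c2 - c1) * c3 + (c3 - c1) * c2 + (a2 - a1) * a3 + (a3 - a1) * a2 + (a1 + c1)/16 > 0"
    proof (cases "a2 < 0")
      case True
      show ?thesis using case2[OF s2 s1 s3 h1 h2 h3 h4 sa sc top neg True] by linarith
    next
      case False
      hence "c2 < 0" using h by simp
      moreover have t1: "c3 + a3 \<le> s" using top by linarith
      moreover have t2: "c1 + a1 < 0" using neg by linarith
      ultimately have "0 < (a2 - a1) * a3 + (a3 - a1) * a2 + (c2 - c1) * c3 + (c3 - c1) * c2 + (c1 + a1) / 16"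
        using case2[OF s2 s1 s3 h3 h4 h1 h2 sc sa] by blast
      thus ?thesis by (simp add: ac_simps)
    qed
    moreover have L: "e/4 < X" if "0 < X + (a1+c1)/16" for X :: real using that x4 ke by argo
    ultimately show "(c2 - c1) * c3 + (c3 - c1) * c2 + (a2 - a1) * a3 + (a3 - a1) * a2 > e / 4"
      by blast
  qed
qed

lemma idx4: "idx = {1,2,3,4}" unfolding idx_def by auto

lemma sec_basis:
  "sec R (\<lambda>i. if i = 1 then 1 else 0) (\<lambda>i. if i = 4 then 1 else 0) = R 1 4 1 4"
  by (simp add: sec_def Rform_def idx4)

lemma on_basis:
  "orthonormal_pair (\<lambda>i. if i = (1::nat) then 1 else 0) (\<lambda>i. if i = 4 then 1 else 0)"
  by (simp add: orthonormal_pair_def inner4_def idx4)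

theorem lemma2p2:
  fixes R :: curv and \<epsilon> :: real
  assumes "curvature_tensor R"
    and "einstein_one R"
    and "\<forall>u v. orthonormal_pair u v \<longrightarrow> sec R u v \<le> sqrt 3 / 2"
    and "berger_basis R"
    and "\<epsilon> > 0"
    and "Kc R 1 2 \<le> - \<epsilon>"
  shows "(a2 R \<ge> 0 \<and> c2 R \<ge> 0 \<longrightarrow> Iq R \<ge> 16 / 3 * \<epsilon>) \<and>
         (a2 R < 0 \<or> c2 R < 0 \<longrightarrow> Iq R > \<epsilon> / 4)"
proof -
  note ct = assms(1)[unfolded curvature_tensor_def]
  have i1: "(1::nat) \<in> idx" and i2: "(2::nat) \<in> idx" and i3: "(3::nat) \<in> idx"
    and i4: "(4::nat) \<in> idx" by (auto simp: idx4)
  have r1111: "R 1 1 1 1 = 0" using ct[rule_format, OF i1 i1 i1 i1] by argo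
  have ein: "(\<Sum>k\<in>idx. R 1 k 1 k) = 1"
    using assms(2)[unfolded einstein_one_def, rule_format, OF i1 i1] by simp
  have Ksum: "Kc R 1 2 + Kc R 1 3 + Kc R 1 4 = 1"
    using ein r1111 unfolding Kc_def idx4 by simp
  have b: "R 2 3 4 1 + R 3 4 2 1 + R 4 2 3 1 = 0" using ct[rule_format, OF i2 i3 i4 i1] by blast
  have e1: "R 2 3 4 1 = R 4 1 2 3" using ct[rule_format, OF i2 i3 i4 i1] by blast
  have e1': "R 4 1 2 3 = - R 1 4 2 3" using ct[rule_format, OF i4 i1 i2 i3] by blast
  have e2: "R 3 4 2 1 = R 2 1 3 4" using ct[rule_format, OF i3 i4 i2 i1] by blast
  have e2': "R 2 1 3 4 = - R 1 2 3 4" using ct[rule_format, OF i2 i1 i3 i4] by blast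
  have e3: "R 4 2 3 1 = R 3 1 4 2" using ct[rule_format, OF i4 i2 i3 i1] by blast
  have e3': "R 3 1 4 2 = - R 1 3 4 2" using ct[rule_format, OF i3 i1 i4 i2] by blast
  have Rsum: "R 1 2 3 4 + R 1 3 4 2 + R 1 4 2 3 = 0" using b e1 e1' e2 e2' e3 e3' by argo
  have z: "Kc R 1 4 \<le> sqrt 3 / 2"
    using assms(3) on_basis sec_basis unfolding Kc_def by metis
  note bb = assms(4)[unfolded berger_basis_def]
  have o1: "a1 R \<le> a2 R" "c1 R \<le> c2 R" using bb unfolding a1_def a2_def c1_def c2_def by auto
  have o2: "a2 R \<le> a3 R" "c2 R \<le> c3 R" using bb unfolding a2_def a3_def c2_def c3_def by auto
  have sa: "a1 R + a2 R + a3 R = 2" using Ksum Rsum unfolding a1_def a2_def a3_def by argo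
  have sc: "c1 R + c2 R + c3 R = 2" using Ksum Rsum unfolding c1_def c2_def c3_def by argo
  have x4: "a1 R + c1 R = 4 * Kc R 1 2" unfolding a1_def c1_def by argo
  have z4: "a3 R + c3 R = 4 * Kc R 1 4" unfolding a3_def c3_def by argo
  define s where "s = 2 * sqrt 3"
  have s2: "s*s = 12" unfolding s_def by simp
  have s1: "s > 3.4"
  proof -
    have "(1.7::real) < sqrt 3" by (rule real_less_rsqrt) (simp add: power2_eq_square)
    thus ?thesis unfolding s_def by simp
  qed
  have s3: "s < 3.5"
  proof -
    have "sqrt 3 < sqrt ((1.75::real)^2)" by (simp only: real_sqrt_less_iff) (simp add: power2_eq_square)
    hence "sqrt 3 < (1.75::real)" by simp
    thus ?thesis unfolding s_def by simp
  qed
  have top: "a3 R + c3 R \<le> s" using z4 z unfolding s_def by argo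
  have neg: "a1 R + c1 R < 0" using x4 assms(5,6) by argo
  show ?thesis unfolding Iq_def
    by (rule final_generic[OF s2 s1 s3 o1(1) o2(1) o1(2) o2(2) sa sc top x4 assms(6,5)])
qed

end
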